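(* Let $S$ be a countable discrete inverse semigroup with identity having a minimal projection $e_0\in E(S)$, and let $\alpha\colon S\to\mathcal I(X)$ be a representation. The following are equivalent: (1) $X$ is $S$-amenable; (2) $D_{e_0}$ is not $S$-paradoxical; (3) $D_{e_0}$ is $S$-domain F\o lner.
   Context: Inverse semigroup: each $s$ has a unique $s^*$ with $ss^*s=s$, $s^*ss^*=s^*$; $E(S)=\{s^*s\}$ is the set of idempotents, ordered by $e\le f\iff ef=e$; $e_0$ is minimal if $f\le e_0$, $f\in E(S)$, implies $f=e_0$. A representation is a unital homomorphism $\alpha\colon S\to\mathcal I(X)$ into partial bijections of $X$; $D_{s^*s}$ is the domain of $\alpha_s$, and $D_e$ the domain of $\alpha_e$. $X$ is $S$-amenable if there is a finitely additive $\mu\colon\mathcal P(X)\to[0,\infty]$ with $\mu(X)=1$, $\mu(B)=\mu(\alpha_s(B))$ for $B\subseteq D_{s^*s}$, and $\mu(B)=\mu(B\cap D_{t^*t})$ for all $t\in S$, $B\subseteq X$. $A\subseteq X$ is $S$-paradoxical if there are $A_i,B_j\subseteq X$, $s_i,t_j\in S$ with $A_i\subseteq D_{s_i^*s_i}$, $B_j\subseteq D_{t_j^*t_j}$, $A=\bigsqcup_{i=1}^n\alpha_{s_i}(A_i)=\bigsqcup_{j=1}^m\alpha_{t_j}(B_j)\supseteq A_1\sqcup\dots\sqcup A_n\sqcup B_1\sqcup\dots\sqcup B_m$. $A$ is $S$-domain F\o lner if there are finite non-empty $F_n\subseteq A$ with $|\alpha_s(F_n\cap D_{s^*s})\setminus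 F_n|/|F_n|\to0$ for all $s\in S$. *)

theory Defs
  imports "HOL-Analysis.Analysis"
begin

definition inverse_semigroup :: "('s::monoid_mult) itself \<Rightarrow> bool" where
  "inverse_semigroup _ \<longleftrightarrow> (\<forall>s::'s. \<exists>!t. s * t * s = s \<and> t * s * t = t)"

definition star :: "'s::monoid_mult \<Rightarrow> 's" where
  "star s = (THE t. s * t * s = s \<and> t * s * t = t)"

definition idempotents :: "('s::monoid_mult) set" where
  "idempotents = {star s * s | s. True}"

definition idem_le :: "'s::monoid_mult \<Rightarrow> 's \<Rightarrow> bool" where
  "idem_le e f \<longleftrightarrow> e * f = e"

definition minimal_projection :: "'s::monoid_mult \<Rightarrow> bool" where
  "minimal_projection e0 \<longleftrightarrow> e0 \<in> idempotents \<and>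
     (\<forall>f \<in> idempotents. idem_le f e0 \<longrightarrow> f = e0)"

definition partial_bij :: "'x set \<Rightarrow> ('x \<Rightarrow> 'x option) \<Rightarrow> bool" where
  "partial_bij X f \<longleftrightarrow> dom f \<subseteq> X \<and> ran f \<subseteq> X \<and> inj_on f (dom f)"

definition representation :: "'x set \<Rightarrow> ('s::monoid_mult \<Rightarrow> 'x \<Rightarrow> 'x option) \<Rightarrow> bool" where
  "representation X \<alpha> \<longleftrightarrow>
     (\<forall>s. partial_bij X (\<alpha> s)) \<and>
     (\<forall>s t. \<alpha> (s * t) = \<alpha> s \<circ>\<^sub>m \<alpha> t) \<and>
     \<alpha> 1 = (\<lambda>x. if x \<in> X then Some x else None)"

definition Dom :: "('s \<Rightarrow> 'x \<Rightarrow> 'x option) \<Rightarrow> 's \<Rightarrow> 'x set" where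
  "Dom \<alpha> e = dom (\<alpha> e)"

definition img :: "('s \<Rightarrow> 'x \<Rightarrow> 'x option) \<Rightarrow> 's \<Rightarrow> 'x set \<Rightarrow> 'x set" where
  "img \<alpha> s B = {y. \<exists>x\<in>B. \<alpha> s x = Some y}"

definition S_amenable :: "'x set \<Rightarrow> ('s::monoid_mult \<Rightarrow> 'x \<Rightarrow> 'x option) \<Rightarrow> bool" where
  "S_amenable X \<alpha> \<longleftrightarrow> (\<exists>\<mu> :: 'x set \<Rightarrow> ennreal.
      (\<forall>A B. A \<subseteq> X \<longrightarrow> B \<subseteq> X \<longrightarrow> A \<inter> B = {} \<longrightarrow> \<mu> (A \<union> B) = \<mu> A + \<mu> B) \<and>
      \<mu> X = 1 \<and>
      (\<forall>s B. B \<subseteq> Dom \<alpha> (star s * s) \<longrightarrow> \<mu> B = \<mu> (img \<alpha> s B)) \<and>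
      (\<forall>t B. B \<subseteq> X \<longrightarrow> \<mu> B = \<mu> (B \<inter> Dom \<alpha> (star t * t))))"

definition S_paradoxical :: "'x set \<Rightarrow> ('s::monoid_mult \<Rightarrow> 'x \<Rightarrow> 'x option) \<Rightarrow> 'x set \<Rightarrow> bool" where
  "S_paradoxical X \<alpha> A \<longleftrightarrow> (\<exists>(n::nat) (m::nat) (As :: nat \<Rightarrow> 'x set) (Bs :: nat \<Rightarrow> 'x set)
        (ss :: nat \<Rightarrow> 's) (ts :: nat \<Rightarrow> 's).
      n \<ge> 1 \<and> m \<ge> 1 \<and>
      (\<forall>i<n. As i \<subseteq> X \<and> As i \<subseteq> Dom \<alpha> (star (ss i) * ss i)) \<and>
      (\<forall>j<m. Bs j \<subseteq> X \<and> Bs j \<subseteq> Dom \<alpha> (star (ts j) * ts j)) \<and>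
      A = (\<Union>i<n. img \<alpha> (ss i) (As i)) \<and>
      disjoint_family_on (\<lambda>i. img \<alpha> (ss i) (As i)) {..<n} \<and>
      A = (\<Union>j<m. img \<alpha> (ts j) (Bs j)) \<and>
      disjoint_family_on (\<lambda>j. img \<alpha> (ts j) (Bs j)) {..<m} \<and>
      disjoint_family_on As {..<n} \<and>
      disjoint_family_on Bs {..<m} \<and>
      (\<forall>i<n. \<forall>j<m. As i \<inter> Bs j = {}) \<and>
      (\<Union>i<n. As i) \<union> (\<Union>j<m. Bs j) \<subseteq> A)"

definition S_domain_Folner :: "('s::monoid_mult \<Rightarrow> 'x \<Rightarrow> 'x option) \<Rightarrow> 'x set \<Rightarrow> bool" where
  "S_domain_Folner \<alpha> A \<longleftrightarrow> (\<exists>F :: nat \<Rightarrow> 'x set.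
      (\<forall>n. finite (F n) \<and> F n \<noteq> {} \<and> F n \<subseteq> A) \<and>
      (\<forall>s. (\<lambda>n. real (card (img \<alpha> s (F n \<inter> Dom \<alpha> (star s * s)) - F n)) / real (card (F n)))
              \<longlonglongrightarrow> 0))"

end

theory Submission
  imports Defs
begin


locale invsg =
  assumes invS: "inverse_semigroup TYPE('s::monoid_mult)"
begin

lemma star1: "(s::'s) * star s * s = s" and star2: "star s * s * star s = star s"
proof -
  have "\<exists>!t. s * t * s = s \<and> t * s * t = t" using invS unfolding inverse_semigroup_def by blast
  from theI'[OF this] show "s * star s * s = s" "star s * s * star s = star s"
    unfolding star_def by auto
qed

lemma star_unique: "(s::'s) * t * s = s \<Longrightarrow> t * s * t = t \<Longrightarrow> star s = t"
proof -
  assume a: "s * t * s = s" "t * s * t = t"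
  have u: "\<exists>!t. s * t * s = s \<and> t * s * t = t" using invS unfolding inverse_semigroup_def by blast
  show ?thesis unfolding star_def using the1_equality[OF u, of t] a by blast
qed

lemma star_idem: "(e::'s) * e = e \<Longrightarrow> star e = e"
  by (rule star_unique) simp_all

lemma star_star: "star (star (s::'s)) = s"
  by (rule star_unique) (simp_all add: star1 star2)

lemma idem_comm:
  assumes e: "(e::'s) * e = e" and f: "f * f = f"
  shows "e * f = f * e"
proof -
  have e': "\<And>z. e * (e * z) = e * z" using e by (metis mult.assoc)
  have f': "\<And>z. f * (f * z) = f * z" using f by (metis mult.assoc)
  have gen: "(a::'s) * b = b * a" if a: "a * a = a" and b: "b * b = b" and
      a': "\<And>z. a * (a * z) = a * z" and b': "\<And>z. b * (b * z) = b * z"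
    and ab: "(a * b) * (a * b) = a * b" and ba: "(b * a) * (b * a) = b * a" for a b :: 's
  proof -
    have "star (a * b) = b * a"
      apply (rule star_unique)
      using ab ba a b a' b' by (simp_all add: mult.assoc)
    moreover have "star (a*b) = a * b" using ab by (rule star_idem)
    ultimately show ?thesis by simp
  qed
  have idm: "(a * b) * (a * b) = a * b" if a: "a * a = a" and b: "b * b = b" and
      a': "\<And>z. a * (a * z) = a * z" and b': "\<And>z. b * (b * z) = b * z" for a b :: 's
  proof -
    define x where "x = star (a * b)"
    have x1: "a * (b * (x * (a * b))) = a * b" using star1[of "a*b"] by (simp add: x_def mult.assoc)
    have x2: "x * (a * (b * x)) = x" using star2[of "a*b"] by (simp add: x_def mult.assoc)
    have x2': "x * (a * (b * (x * z))) = x * z" for z using x2 by (metis mult.assoc)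
    have "star (a * b) = b * x * a"
      apply (rule star_unique)
      using x1 x2 x2' a' b' by (simp_all add: mult.assoc)
    hence xe: "x = b * x * a" by (simp add: x_def)
    have "x * x = b * (x * (a * (b * x))) * a" using xe
      by (metis mult.assoc)
    also have "\<dots> = x" using x2 xe by (simp add: mult.assoc)
    finally have xx: "x * x = x" .
    have "star x = a * b"
      by (rule star_unique) (use x1 x2 in \<open>simp_all add: mult.assoc\<close>)
    moreover have "star x = x" using xx by (rule star_idem)
    ultimately show ?thesis using xx by simp
  qed
  show ?thesis
    by (rule gen[OF e f e' f' idm[OF e f e' f'] idm[OF f e f' e']])
qed

lemma idempotents_iff: "(e::'s) \<in> idempotents \<longleftrightarrow> e * e = e"
proof
  assume "e \<in> idempotents"
  then obtain s where "e = star s * s" unfolding idempotents_def by auto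
  thus "e * e = e" using star2[of s] by (metis mult.assoc)
next
  assume "e * e = e"
  hence "e = star e * e" using star_idem by simp
  thus "e \<in> idempotents" unfolding idempotents_def by auto
qed

lemma idem_mult: "(e::'s) * e = e \<Longrightarrow> f * f = f \<Longrightarrow> (e * f) * (e * f) = e * f"
  by (metis idem_comm mult.assoc)

lemma starss_idem: "(star (s::'s) * s) * (star s * s) = star s * s"
  using star2[of s] by (metis mult.assoc)

lemma conj_idem: "(e::'s) * e = e \<Longrightarrow> (star s * e * s) * (star s * e * s) = star s * e * s"
proof -
  assume e: "e * e = e"
  have c: "e * (s * star s) = (s * star s) * e"
    by (rule idem_comm[OF e]) (metis star1 mult.assoc)
  have "(star s * e * s) * (star s * e * s) = star s * (e * (s * star s)) * e * s"
    by (simp add: mult.assoc)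
  also have "\<dots> = star s * s * star s * e * e * s" using c by (simp add: mult.assoc)
  also have "\<dots> = star s * e * s" using star2[of s] e by (simp add: mult.assoc)
  finally show ?thesis .
qed

lemma minimal_le:
  assumes m: "minimal_projection (e0::'s)" and f: "f * f = f"
  shows "e0 * f = e0" "f * e0 = e0"
proof -
  have e0: "e0 * e0 = e0" using m idempotents_iff unfolding minimal_projection_def by auto
  have "e0 * f \<in> idempotents" using idem_mult[OF e0 f] idempotents_iff by blast
  moreover have "idem_le (e0 * f) e0" unfolding idem_le_def
    using idem_comm[OF e0 f] e0 by (metis mult.assoc)
  ultimately show "e0 * f = e0" using m unfolding minimal_projection_def by blast
  thus "f * e0 = e0" using idem_comm[OF e0 f] by simp
qed

end

locale setting = invsg +
  fixes X :: "'x set" and \<alpha> :: "'s::monoid_mult \<Rightarrow> 'x \<Rightarrow> 'x option" and e0 :: 's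
  assumes minp: "minimal_projection e0"
    and rep: "representation X \<alpha>"
begin

abbreviation "Y \<equiv> Dom \<alpha> e0"

lemma pb: "partial_bij X (\<alpha> s)" using rep unfolding representation_def by blast

lemma hom: "\<alpha> (s * t) = \<alpha> s \<circ>\<^sub>m \<alpha> t" using rep unfolding representation_def by blast

lemma hom_app: "\<alpha> (s * t) x = (case \<alpha> t x of None \<Rightarrow> None | Some y \<Rightarrow> \<alpha> s y)"
  by (simp add: hom map_comp_def)

lemma one_app: "\<alpha> 1 x = (if x \<in> X then Some x else None)"
  using rep unfolding representation_def by simp

lemma dom_X: "\<alpha> s x = Some y \<Longrightarrow> x \<in> X"
  using pb[of s] unfolding partial_bij_def by blast

lemma ran_X: "\<alpha> s x = Some y \<Longrightarrow> y \<in> X"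
  using pb[of s] unfolding partial_bij_def ran_def by blast

lemma inj_app: "\<alpha> s x = Some z \<Longrightarrow> \<alpha> s y = Some z \<Longrightarrow> x = y"
  using pb[of s] unfolding partial_bij_def inj_on_def by (metis domI)

lemma idem_app: assumes e: "e * e = e" and x: "\<alpha> e x = Some y" shows "y = x"
proof -
  have "\<alpha> e x = (case \<alpha> e x of None \<Rightarrow> None | Some y \<Rightarrow> \<alpha> e y)" using hom_app[of e e x] e by simp
  hence "\<alpha> e y = Some y" using x by simp
  thus ?thesis using inj_app x by metis
qed

lemma dom_eq: "x \<in> Dom \<alpha> (star s * s) \<longleftrightarrow> \<alpha> s x \<noteq> None"
proof
  assume "x \<in> Dom \<alpha> (star s * s)"
  thus "\<alpha> s x \<noteq> None" unfolding Dom_def using hom_app[of "star s" s x] by (auto split: option.splits)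
next
  assume "\<alpha> s x \<noteq> None"
  hence "\<alpha> (s * (star s * s)) x \<noteq> None" using star1[of s] by (simp add: mult.assoc)
  thus "x \<in> Dom \<alpha> (star s * s)" unfolding Dom_def using hom_app[of s "star s * s" x]
    by (auto split: option.splits)
qed

lemma inv_app: assumes "\<alpha> s x = Some y" shows "\<alpha> (star s) y = Some x"
proof -
  have "x \<in> Dom \<alpha> (star s * s)" using dom_eq assms by simp
  then obtain z where z: "\<alpha> (star s * s) x = Some z" unfolding Dom_def by auto
  hence "z = x" using idem_app starss_idem by blast
  thus ?thesis using z hom_app[of "star s" s x] assms by simp
qed

lemma e0_idem: "e0 * e0 = e0" using minp idempotents_iff unfolding minimal_projection_def by auto

lemma Y_sub_idem: assumes "e * e = e" shows "Y \<subseteq> Dom \<alpha> e"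
proof
  fix y assume "y \<in> Y"
  hence "\<alpha> (e0 * e) y \<noteq> None" using minimal_le(1)[OF minp assms] by (auto simp: Dom_def)
  thus "y \<in> Dom \<alpha> e" unfolding Dom_def by (auto simp: hom_app split: option.splits)
qed

lemma Y_sub_dom: "Y \<subseteq> Dom \<alpha> (star s * s)" using Y_sub_idem starss_idem by blast

lemma Y_app: "y \<in> Y \<Longrightarrow> \<exists>z. \<alpha> s y = Some z"
  using Y_sub_dom dom_eq by blast

lemma Y_X: "Y \<subseteq> X" unfolding Dom_def using dom_X by blast

lemma e0_app: "y \<in> Y \<Longrightarrow> \<alpha> e0 y = Some y"
  using idem_app[OF e0_idem] unfolding Dom_def by blast

lemma Y_maps: assumes y: "y \<in> Y" and z: "\<alpha> s y = Some z" shows "z \<in> Y"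
proof -
  define g where "g = star s * e0 * s"
  have g: "g * g = g" unfolding g_def by (rule conj_idem[OF e0_idem])
  have "g * e0 = e0" using minimal_le(2)[OF minp g] .
  hence "\<alpha> g y = Some y" using hom_app[of g e0 y] e0_app[OF y] idem_app[OF g]
    by (metis option.exhaust option.simps(5))
  hence "\<alpha> (star s * e0) z \<noteq> None" using hom_app[of "star s * e0" s y] z unfolding g_def by auto
  thus "z \<in> Y" unfolding Dom_def by (auto simp: hom_app split: option.splits)
qed

lemma Y_back: assumes x: "\<alpha> s x = Some z" and z: "z \<in> Y" shows "x \<in> Y"
  using Y_maps[OF z inv_app[OF x]] .

lemma img_comp: "img \<alpha> s (img \<alpha> t B) = img \<alpha> (s * t) B"
  unfolding img_def by (auto simp: hom_app split: option.splits)

lemma img_Y: "B \<subseteq> Y \<Longrightarrow> img \<alpha> s B \<subseteq> Y"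
  unfolding img_def using Y_maps by blast

lemma card_img: assumes "finite B" shows "card (img \<alpha> s B) \<le> card B"
proof -
  have "img \<alpha> s B \<subseteq> (\<lambda>x. the (\<alpha> s x)) ` B" unfolding img_def by force
  thus ?thesis using assms by (meson card_image_le card_mono finite_imageI order_trans)
qed

lemma finite_img: "finite B \<Longrightarrow> finite (img \<alpha> s B)"
proof -
  assume "finite B"
  moreover have "img \<alpha> s B \<subseteq> (\<lambda>x. the (\<alpha> s x)) ` B" unfolding img_def by force
  ultimately show ?thesis by (meson finite_imageI finite_subset)
qed

lemma card_img_Y: assumes "B \<subseteq> Y" shows "card (img \<alpha> s B) = card B"
proof -
  have "img \<alpha> s B = (\<lambda>x. the (\<alpha> s x)) ` B" unfolding img_def using assms Y_app by force
  moreover have "inj_on (\<lambda>x. the (\<alpha> s x)) B"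
    unfolding inj_on_def using assms Y_app inj_app by (metis option.sel subsetD)
  ultimately show ?thesis by (simp add: card_image)
qed

end




lemma fin_add:
  fixes \<mu> :: "'x set \<Rightarrow> ennreal"
  assumes add: "\<forall>A B. A \<subseteq> X \<longrightarrow> B \<subseteq> X \<longrightarrow> A \<inter> B = {} \<longrightarrow> \<mu> (A \<union> B) = \<mu> A + \<mu> B"
    and e: "\<mu> {} = 0"
    and P: "\<forall>i<(n::nat). P i \<subseteq> X" and d: "disjoint_family_on P {..<n}"
  shows "\<mu> (\<Union>i<n. P i) = (\<Sum>i<n. \<mu> (P i))"
  using P d
proof (induction n)
  case 0 then show ?case using e by simp
next
  case (Suc n)
  have d': "disjoint_family_on P {..<n}" using Suc.prems(2) unfolding disjoint_family_on_def by auto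
  have "(\<Union>i<Suc n. P i) = (\<Union>i<n. P i) \<union> P n" by (auto simp: lessThan_Suc)
  moreover have "P i \<inter> P n = {}" if "i<n" for i
    using Suc.prems(2) that unfolding disjoint_family_on_def by auto
  hence "(\<Union>i<n. P i) \<inter> P n = {}" by blast
  moreover have Pn: "\<forall>i<n. P i \<subseteq> X" "P n \<subseteq> X" using Suc.prems(1) by simp_all
  moreover have "(\<Union>i<n. P i) \<subseteq> X" using Pn by blast
  ultimately have "\<mu> (\<Union>i<Suc n. P i) = \<mu> (\<Union>i<n. P i) + \<mu> (P n)" using add by simp
  thus ?case using Suc.IH[OF _ d'] Suc.prems(1) by simp
qed

context setting
begin

lemma amen_not_par:
  assumes am: "S_amenable X \<alpha>" shows "\<not> S_paradoxical X \<alpha> Y"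
proof
  assume par: "S_paradoxical X \<alpha> Y"
  obtain \<mu> :: "'x set \<Rightarrow> ennreal" where
    add: "\<forall>A B. A \<subseteq> X \<longrightarrow> B \<subseteq> X \<longrightarrow> A \<inter> B = {} \<longrightarrow> \<mu> (A \<union> B) = \<mu> A + \<mu> B" and
    mX: "\<mu> X = 1" and inv: "\<forall>s B. B \<subseteq> Dom \<alpha> (star s * s) \<longrightarrow> \<mu> B = \<mu> (img \<alpha> s B)" and
    conc: "\<forall>t B. B \<subseteq> X \<longrightarrow> \<mu> B = \<mu> (B \<inter> Dom \<alpha> (star t * t))"
    using am unfolding S_amenable_def by blast
  have "\<mu> (X \<union> {}) = \<mu> X + \<mu> {}" by (intro add[rule_format]) auto
  hence e: "\<mu> {} = 0" using mX by simp
  have mono: "\<mu> C \<le> \<mu> D" if "C \<subseteq> D" "D \<subseteq> X" for C D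
  proof -
    have "\<mu> (C \<union> (D - C)) = \<mu> C + \<mu> (D - C)" using that by (intro add[rule_format]) auto
    moreover have "C \<union> (D - C) = D" using that by blast
    ultimately have "\<mu> D = \<mu> C + \<mu> (D - C)" by simp
    thus ?thesis by simp
  qed
  obtain t where t: "e0 = star t * t" using minp unfolding minimal_projection_def idempotents_def by auto
  have "X \<inter> Y = Y" using Y_X by blast
  moreover have "\<mu> X = \<mu> (X \<inter> Dom \<alpha> (star t * t))" using conc by simp
  ultimately have mY: "\<mu> Y = 1" using mX t by simp
  obtain n m As Bs ss ts where
    nm: "(n::nat) \<ge> 1" "(m::nat) \<ge> 1" and
    As: "\<forall>i<n. As i \<subseteq> X \<and> As i \<subseteq> Dom \<alpha> (star (ss i) * ss i)" and
    Bs: "\<forall>j<m. Bs j \<subseteq> X \<and> Bs j \<subseteq> Dom \<alpha> (star (ts j) * ts j)" and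
    U1: "Y = (\<Union>i<n. img \<alpha> (ss i) (As i))" and
    D1: "disjoint_family_on (\<lambda>i. img \<alpha> (ss i) (As i)) {..<n}" and
    U2: "Y = (\<Union>j<m. img \<alpha> (ts j) (Bs j))" and
    D2: "disjoint_family_on (\<lambda>j. img \<alpha> (ts j) (Bs j)) {..<m}" and
    DA: "disjoint_family_on As {..<n}" and
    DB: "disjoint_family_on Bs {..<m}" and
    AB: "\<forall>i<n. \<forall>j<m. As i \<inter> Bs j = {}" and
    sub: "(\<Union>i<n. As i) \<union> (\<Union>j<m. Bs j) \<subseteq> Y"
    using par unfolding S_paradoxical_def by (elim exE conjE) (rule that, assumption+)
  have "\<mu> Y = (\<Sum>i<n. \<mu> (img \<alpha> (ss i) (As i)))"
  proof -
    have "\<forall>i<n. img \<alpha> (ss i) (As i) \<subseteq> X" using U1 Y_X by auto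
    from fin_add[OF add e this D1] U1 show ?thesis by simp
  qed
  also have "\<dots> = (\<Sum>i<n. \<mu> (As i))" by (rule sum.cong[OF refl]) (metis inv As lessThan_iff)
  also have "\<dots> = \<mu> (\<Union>i<n. As i)" using fin_add[OF add e _ DA] As by simp
  finally have 1: "\<mu> (\<Union>i<n. As i) = 1" using mY by simp
  have "\<mu> Y = (\<Sum>j<m. \<mu> (img \<alpha> (ts j) (Bs j)))"
  proof -
    have "\<forall>j<m. img \<alpha> (ts j) (Bs j) \<subseteq> X" using U2 Y_X by auto
    from fin_add[OF add e this D2] U2 show ?thesis by simp
  qed
  also have "\<dots> = (\<Sum>j<m. \<mu> (Bs j))" by (rule sum.cong[OF refl]) (metis inv Bs lessThan_iff)
  also have "\<dots> = \<mu> (\<Union>j<m. Bs j)" using fin_add[OF add e _ DB] Bs by simp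
  finally have 2: "\<mu> (\<Union>j<m. Bs j) = 1" using mY by simp
  have "\<mu> ((\<Union>i<n. As i) \<union> (\<Union>j<m. Bs j)) = \<mu> (\<Union>i<n. As i) + \<mu> (\<Union>j<m. Bs j)"
    using As Bs AB by (intro add[rule_format]) (auto, blast)
  also have "\<dots> = 2" using 1 2 by simp
  finally have "2 \<le> \<mu> Y" using mono[OF sub Y_X] by simp
  thus False using mY by simp
qed

end



lemma compact_cluster:
  fixes u :: "nat \<Rightarrow> 'a::topological_space"
  assumes K: "compact K" and uK: "\<forall>n. u n \<in> K" and cl: "\<forall>c\<in>CC. closed c"
    and ev: "\<forall>c\<in>CC. eventually (\<lambda>n. u n \<in> c) sequentially"
  shows "\<exists>f\<in>K. \<forall>c\<in>CC. f \<in> c"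
proof -
  have "K \<inter> \<Inter>CC \<noteq> {}"
  proof (rule compact_imp_fip[OF K])
    show "\<And>T. T \<in> CC \<Longrightarrow> closed T" using cl by blast
    fix B assume B: "finite B" "B \<subseteq> CC"
    have "\<forall>c\<in>B. eventually (\<lambda>n. u n \<in> c) sequentially" using B(2) ev by blast
    from eventually_ball_finite[OF B(1) this]
    have "eventually (\<lambda>n. \<forall>c\<in>B. u n \<in> c) sequentially" .
    then obtain N where "\<forall>n\<ge>N. \<forall>c\<in>B. u n \<in> c" unfolding eventually_sequentially by blast
    then obtain n where "\<forall>c\<in>B. u n \<in> c" by blast
    thus "K \<inter> \<Inter>B \<noteq> {}" using uK by blast
  qed
  thus ?thesis by blast
qed

lemma compact_unit_funs: "compact {f :: 'b \<Rightarrow> real. \<forall>B. f B \<in> {0..1}}"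
proof -
  have "compactin (product_topology (\<lambda>_. euclidean) UNIV) (PiE UNIV (\<lambda>_::'b. {0..1::real}))"
    by (simp add: compactin_PiE)
  hence "compact (PiE UNIV (\<lambda>_::'b. {0..1::real}))" by (simp add: euclidean_product_topology)
  moreover have "PiE UNIV (\<lambda>_::'b. {0..1::real}) = {f. \<forall>B. f B \<in> {0..1}}"
    by (auto simp: PiE_def Pi_def)
  ultimately show ?thesis by simp
qed

context setting
begin

lemma est1:
  assumes C: "C \<subseteq> Y" and F: "finite F" "F \<subseteq> Y"
  shows "card (C \<inter> F) \<le> card (img \<alpha> s C \<inter> F) + card (img \<alpha> s F - F)"
proof -
  have "img \<alpha> s (C \<inter> F) \<subseteq> (img \<alpha> s C \<inter> F) \<union> (img \<alpha> s F - F)"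
    unfolding img_def by auto
  hence "card (img \<alpha> s (C \<inter> F)) \<le> card ((img \<alpha> s C \<inter> F) \<union> (img \<alpha> s F - F))"
    by (intro card_mono) (use F finite_img in auto)
  also have "\<dots> \<le> card (img \<alpha> s C \<inter> F) + card (img \<alpha> s F - F)" by (rule card_Un_le)
  moreover have "C \<inter> F \<subseteq> Y" using C by blast
  ultimately show ?thesis using card_img_Y[of "C \<inter> F" s] by simp
qed

lemma est2:
  assumes C: "C \<subseteq> Y" and F: "finite F" "F \<subseteq> Y"
  shows "card (img \<alpha> s C \<inter> F) \<le> card (C \<inter> F) + card (img \<alpha> (star s) F - F)"
proof -
  have "img \<alpha> s C \<inter> F \<subseteq> img \<alpha> s (C \<inter> F) \<union> img \<alpha> s (img \<alpha> (star s) F - F)"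
  proof
    fix z assume z: "z \<in> img \<alpha> s C \<inter> F"
    then obtain c where c: "c \<in> C" "\<alpha> s c = Some z" unfolding img_def by auto
    have "\<alpha> (star s) z = Some c" using inv_app[OF c(2)] .
    thus "z \<in> img \<alpha> s (C \<inter> F) \<union> img \<alpha> s (img \<alpha> (star s) F - F)"
      using c z unfolding img_def by auto
  qed
  hence "card (img \<alpha> s C \<inter> F) \<le> card (img \<alpha> s (C \<inter> F) \<union> img \<alpha> s (img \<alpha> (star s) F - F))"
    by (intro card_mono) (use F finite_img in auto)
  also have "\<dots> \<le> card (img \<alpha> s (C \<inter> F)) + card (img \<alpha> s (img \<alpha> (star s) F - F))"
    by (rule card_Un_le)
  also have "\<dots> \<le> card (C \<inter> F) + card (img \<alpha> (star s) F - F)"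
  proof -
    have "C \<inter> F \<subseteq> Y" using C by blast
    hence "card (img \<alpha> s (C \<inter> F)) = card (C \<inter> F)" by (rule card_img_Y)
    moreover have "card (img \<alpha> s (img \<alpha> (star s) F - F)) \<le> card (img \<alpha> (star s) F - F)"
      using F finite_img by (intro card_img) auto
    ultimately show ?thesis by simp
  qed
  finally show ?thesis .
qed

lemma folner_amen:
  assumes fo: "S_domain_Folner \<alpha> Y" shows "S_amenable X \<alpha>"
proof -
  obtain F where F: "\<forall>n. finite (F n) \<and> F n \<noteq> {} \<and> F n \<subseteq> Y" and
    lim0: "\<forall>s. (\<lambda>n. real (card (img \<alpha> s (F n \<inter> Dom \<alpha> (star s * s)) - F n)) / real (card (F n)))
              \<longlonglongrightarrow> 0"
    using fo unfolding S_domain_Folner_def by blast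
  define r where "r s n = real (card (img \<alpha> s (F n) - F n)) / real (card (F n))" for s n
  have FD: "F n \<inter> Dom \<alpha> (star s * s) = F n" for n s using F Y_sub_dom by blast
  have rlim: "r s \<longlonglongrightarrow> 0" for s using lim0 FD unfolding r_def by simp
  have cpos: "card (F n) > 0" for n using F by (simp add: card_gt_0_iff)
  define u where "u n = (\<lambda>B. real (card (B \<inter> F n)) / real (card (F n)))" for n
  define K where "K = {f :: 'x set \<Rightarrow> real. \<forall>B. f B \<in> {0..1}}"
  have uK: "\<forall>n. u n \<in> K"
  proof
    fix n
    have "card (B \<inter> F n) \<le> card (F n)" for B using F by (intro card_mono) auto
    thus "u n \<in> K" unfolding K_def u_def using cpos[of n] by (auto simp: field_simps)
  qed
  define C1 where "C1 = {{f :: 'x set \<Rightarrow> real. f (A \<union> B) = f A + f B} | A B. A \<inter> B = {}}"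
  define C2 where "C2 = {{f :: 'x set \<Rightarrow> real. f Y = 1}}"
  define C3 where "C3 = {{f :: 'x set \<Rightarrow> real. \<bar>f C - f (img \<alpha> s C)\<bar> \<le> \<delta>} | C s \<delta>. C \<subseteq> Y \<and> \<delta> > 0}"
  have cont: "continuous_on UNIV (\<lambda>f :: 'x set \<Rightarrow> real. f A)" for A by simp
  have cl: "\<forall>c\<in>C1 \<union> C2 \<union> C3. closed c"
  proof -
    have "closed {f :: 'x set \<Rightarrow> real. f (A \<union> B) = f A + f B}" for A B
      by (intro closed_Collect_eq continuous_intros cont)
    moreover have "closed {f :: 'x set \<Rightarrow> real. f Y = 1}"
      by (intro closed_Collect_eq continuous_intros cont)
    moreover have "closed {f :: 'x set \<Rightarrow> real. \<bar>f C - f D\<bar> \<le> \<delta>}" for C D \<delta>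
      by (intro closed_Collect_le continuous_intros cont)
    ultimately show ?thesis unfolding C1_def C2_def C3_def by blast
  qed
  have ev: "\<forall>c\<in>C1 \<union> C2 \<union> C3. eventually (\<lambda>n. u n \<in> c) sequentially"
  proof
    fix c assume "c \<in> C1 \<union> C2 \<union> C3"
    then consider (a) A B where "c = {f. f (A \<union> B) = f A + f B}" "A \<inter> B = {}"
      | (b) "c = {f. f Y = 1}"
      | (d) C s \<delta> where "c = {f. \<bar>f C - f (img \<alpha> s C)\<bar> \<le> \<delta>}" "C \<subseteq> Y" "\<delta> > 0"
      unfolding C1_def C2_def C3_def by blast
    then show "eventually (\<lambda>n. u n \<in> c) sequentially"
    proof cases
      case a
      have "u n \<in> c" for n
      proof -
        have "(A \<union> B) \<inter> F n = (A \<inter> F n) \<union> (B \<inter> F n)" by blast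
        moreover have "card ((A \<inter> F n) \<union> (B \<inter> F n)) = card (A \<inter> F n) + card (B \<inter> F n)"
          using a F by (intro card_Un_disjoint) auto
        ultimately show ?thesis using a unfolding u_def by (simp add: add_divide_distrib)
      qed
      thus ?thesis by simp
    next
      case b
      have "u n \<in> c" for n
        using b F cpos[of n] unfolding u_def by (simp add: Int_absorb1)
      thus ?thesis by simp
    next
      case d
      have "eventually (\<lambda>n. r s n + r (star s) n < \<delta>) sequentially"
        using tendsto_add[OF rlim[of s] rlim[of "star s"]] d(3) by (simp add: order_tendstoD(2))
      moreover have "\<bar>u n C - u n (img \<alpha> s C)\<bar> \<le> r s n + r (star s) n" for n
      proof -
        have e1: "real (card (C \<inter> F n)) \<le> real (card (img \<alpha> s C \<inter> F n)) + real (card (img \<alpha> s (F n) - F n))"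
          using est1[OF d(2), of "F n" s] F by simp
        have e2: "real (card (img \<alpha> s C \<inter> F n)) \<le> real (card (C \<inter> F n)) + real (card (img \<alpha> (star s) (F n) - F n))"
          using est2[OF d(2), of "F n" s] F by simp
        have "\<bar>real (card (C \<inter> F n)) - real (card (img \<alpha> s C \<inter> F n))\<bar>
           \<le> real (card (img \<alpha> s (F n) - F n)) + real (card (img \<alpha> (star s) (F n) - F n))"
          using e1 e2 by linarith
        hence "\<bar>real (card (C \<inter> F n)) - real (card (img \<alpha> s C \<inter> F n))\<bar> / real (card (F n))
           \<le> (real (card (img \<alpha> s (F n) - F n)) + real (card (img \<alpha> (star s) (F n) - F n))) / real (card (F n))"
          using cpos[of n] by (intro divide_right_mono) auto
        thus ?thesis unfolding u_def r_def
          by (simp add: add_divide_distrib diff_divide_distrib[symmetric] abs_divide)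
      qed
      ultimately show ?thesis using d(1) by (auto elim!: eventually_mono intro: order_trans less_imp_le)
    qed
  qed
  obtain f where fK: "f \<in> K" and fc: "\<forall>c\<in>C1 \<union> C2 \<union> C3. f \<in> c"
    using compact_cluster[OF _ uK cl ev] compact_unit_funs unfolding K_def by blast
  have f0: "f B \<ge> 0" for B using fK unfolding K_def by auto
  have fadd: "f (A \<union> B) = f A + f B" if "A \<inter> B = {}" for A B
  proof -
    have "{f :: 'x set \<Rightarrow> real. f (A \<union> B) = f A + f B} \<in> C1" unfolding C1_def using that by blast
    hence "f \<in> {f :: 'x set \<Rightarrow> real. f (A \<union> B) = f A + f B}" by (intro fc[THEN bspec]) (rule UnI1, rule UnI1)
    thus ?thesis by simp
  qed
  have "f \<in> {f :: 'x set \<Rightarrow> real. f Y = 1}" by (intro fc[THEN bspec]) (simp add: C2_def)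
  hence fY: "f Y = 1" by simp
  have finv: "f C = f (img \<alpha> s C)" if "C \<subseteq> Y" for C s
  proof -
    have "\<bar>f C - f (img \<alpha> s C)\<bar> \<le> \<delta>" if "\<delta> > 0" for \<delta>
    proof -
      have "{f :: 'x set \<Rightarrow> real. \<bar>f C - f (img \<alpha> s C)\<bar> \<le> \<delta>} \<in> C3"
        unfolding C3_def using that \<open>C \<subseteq> Y\<close> by blast
      hence "f \<in> {f :: 'x set \<Rightarrow> real. \<bar>f C - f (img \<alpha> s C)\<bar> \<le> \<delta>}" by (intro fc[THEN bspec]) (rule UnI2)
      thus ?thesis by simp
    qed
    hence "\<bar>f C - f (img \<alpha> s C)\<bar> \<le> 0" by (meson dense not_le)
    thus ?thesis by simp
  qed
  define \<mu> where "\<mu> B = ennreal (f (B \<inter> Y))" for B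
  show ?thesis unfolding S_amenable_def
  proof (intro exI[of _ \<mu>] conjI allI impI)
    fix A B assume "A \<subseteq> X" "B \<subseteq> X" "A \<inter> B = {}"
    hence "f ((A \<union> B) \<inter> Y) = f (A \<inter> Y) + f (B \<inter> Y)"
    proof -
      have "A \<inter> Y \<inter> (B \<inter> Y) = {}" using \<open>A \<inter> B = {}\<close> by blast
      from fadd[OF this] show ?thesis by (simp add: Int_Un_distrib2)
    qed
    thus "\<mu> (A \<union> B) = \<mu> A + \<mu> B" unfolding \<mu>_def using f0 by (simp add: ennreal_plus)
  next
    show "\<mu> X = 1" unfolding \<mu>_def using fY Y_X by (simp add: Int_absorb1)
  next
    fix s B assume B: "B \<subseteq> Dom \<alpha> (star s * s)"
    have "img \<alpha> s B \<inter> Y = img \<alpha> s (B \<inter> Y)"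
      unfolding img_def using Y_maps Y_back by blast
    thus "\<mu> B = \<mu> (img \<alpha> s B)" unfolding \<mu>_def using finv[of "B \<inter> Y" s] by simp
  next
    fix t B assume "B \<subseteq> X"
    have "B \<inter> Dom \<alpha> (star t * t) \<inter> Y = B \<inter> Y" using Y_sub_dom[of t] by blast
    thus "\<mu> B = \<mu> (B \<inter> Dom \<alpha> (star t * t))" unfolding \<mu>_def by simp
  qed
qed

end



lemma finite_hall:
  fixes N :: "'a \<Rightarrow> 'b set"
  assumes "finite I" "\<forall>i\<in>I. finite (N i)" "\<forall>J\<subseteq>I. card J \<le> card (\<Union>(N ` J))"
  shows "\<exists>f. (\<forall>i\<in>I. f i \<in> N i) \<and> inj_on f I"
  using assms
proof (induction "card I" arbitrary: I N rule: less_induct)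
  case less
  note fI = less.prems(1) and fN = less.prems(2) and H = less.prems(3)
  show ?case
  proof (cases "I = {}")
    case True then show ?thesis by auto
  next
    case False
    show ?thesis
    proof (cases "\<exists>J. J \<noteq> {} \<and> J \<subset> I \<and> card (\<Union>(N ` J)) = card J")
      case True
      then obtain J where J: "J \<noteq> {}" "J \<subset> I" "card (\<Union>(N ` J)) = card J" by blast
      have fJ: "finite J" using J fI finite_subset by blast
      have cJ: "card J < card I" using J fI by (simp add: psubset_card_mono)
      have HJ: "\<forall>K\<subseteq>J. card K \<le> card (\<Union>(N ` K))"
      proof (intro allI impI)
        fix K assume "K \<subseteq> J"
        hence "K \<subseteq> I" using J(2) by blast
        thus "card K \<le> card (\<Union>(N ` K))" using H by blast
      qed
      have fNJ: "\<forall>i\<in>J. finite (N i)" using fN J(2) by blast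
      obtain f1 where f1: "\<forall>i\<in>J. f1 i \<in> N i" "inj_on f1 J"
        using less.hyps[OF cJ fJ fNJ HJ] by blast
      define U where "U = \<Union>(N ` J)"
      have fU: "finite U" unfolding U_def using fJ fN J by auto
      define N' where "N' i = N i - U" for i
      define I' where "I' = I - J"
      have fI': "finite I'" using fI I'_def by simp
      have cI': "card I' < card I"
      proof -
        have "card (I - J) = card I - card J" using fJ J(2) by (simp add: card_Diff_subset psubset_imp_subset)
        moreover have "card J > 0" using fJ J(1) by (simp add: card_gt_0_iff)
        ultimately show ?thesis using cJ unfolding I'_def by simp
      qed
      have H': "\<forall>K\<subseteq>I'. card K \<le> card (\<Union>(N' ` K))"
      proof (intro allI impI)
        fix K assume K: "K \<subseteq> I'"
        have fK: "finite K" using K fI' finite_subset by blast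
        have KJ: "K \<inter> J = {}" using K I'_def by blast
        have KJI: "K \<union> J \<subseteq> I" using K J I'_def by blast
        have e: "\<Union>(N' ` K) = \<Union>(N ` (K \<union> J)) - U" unfolding N'_def U_def by blast
        have fin: "finite (\<Union>(N ` (K \<union> J)))" using fK fJ fN KJI by auto
        have "card K + card J = card (K \<union> J)" using KJ fK fJ by (simp add: card_Un_disjoint)
        also have "\<dots> \<le> card (\<Union>(N ` (K \<union> J)))" using H KJI by blast
        finally have 1: "card K + card J \<le> card (\<Union>(N ` (K \<union> J)))" .
        have "card (\<Union>(N ` (K \<union> J)) - U) = card (\<Union>(N ` (K \<union> J))) - card U"
          by (rule card_Diff_subset) (use fU U_def in auto)
        thus "card K \<le> card (\<Union>(N' ` K))" using 1 e J(3) U_def by simp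
      qed
      have fN': "\<forall>i\<in>I'. finite (N' i)" using fN unfolding I'_def N'_def by blast
      obtain f2 where f2: "\<forall>i\<in>I'. f2 i \<in> N' i" "inj_on f2 I'"
        using less.hyps[OF cI' fI' fN' H'] by blast
      define f where "f i = (if i \<in> J then f1 i else f2 i)" for i
      have "\<forall>i\<in>I. f i \<in> N i" using f1 f2 unfolding f_def I'_def N'_def by auto
      moreover have "inj_on f I"
      proof (rule inj_onI)
        fix a b assume a: "a \<in> I" and b: "b \<in> I" and ab: "f a = f b"
        have inU: "f1 i \<in> U" if "i \<in> J" for i using f1 that U_def by blast
        have notU: "f2 i \<notin> U" if "i \<in> I'" for i using f2 that N'_def by blast
        show "a = b"
        proof (cases "a \<in> J"; cases "b \<in> J")
          assume "a \<in> J" "b \<in> J" thus ?thesis using ab f1(2) f_def by (simp add: inj_on_def)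
        next
          assume "a \<in> J" "b \<notin> J" thus ?thesis using ab inU notU b I'_def f_def by force
        next
          assume "a \<notin> J" "b \<in> J" thus ?thesis using ab inU notU a I'_def f_def by force
        next
          assume "a \<notin> J" "b \<notin> J" thus ?thesis using ab f2(2) a b f_def I'_def by (simp add: inj_on_def)
        qed
      qed
      ultimately show ?thesis by blast
    next
      case nt: False
      obtain i0 where i0: "i0 \<in> I" using False by blast
      have "card {i0} \<le> card (\<Union>(N ` {i0}))" using H i0 by blast
      hence "card (N i0) \<ge> 1" by simp
      then obtain x where x: "x \<in> N i0" by (metis card.empty ex_in_conv not_one_le_zero)
      define N' where "N' i = N i - {x}" for i
      define I' where "I' = I - {i0}"
      have fI': "finite I'" using fI I'_def by simp
      have cI': "card I' < card I" unfolding I'_def using i0 fI card_gt_0_iff[of I] by (auto simp: card_Diff_singleton)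
      have H': "\<forall>K\<subseteq>I'. card K \<le> card (\<Union>(N' ` K))"
      proof (intro allI impI)
        fix K assume K: "K \<subseteq> I'"
        show "card K \<le> card (\<Union>(N' ` K))"
        proof (cases "K = {}")
          case True then show ?thesis by simp
        next
          case Kne: False
          have KI: "K \<subset> I" using K I'_def i0 by blast
          have fK: "finite K" using K fI' finite_subset by blast
          have fin: "finite (\<Union>(N ` K))" using fK fN KI by auto
          have "card K \<le> card (\<Union>(N ` K))" using H KI by blast
          moreover have "card (\<Union>(N ` K)) \<noteq> card K" using nt Kne KI by blast
          ultimately have 1: "card K + 1 \<le> card (\<Union>(N ` K))" by simp
          have e: "\<Union>(N' ` K) = \<Union>(N ` K) - {x}" unfolding N'_def by blast
          have "card (\<Union>(N ` K)) \<le> card (\<Union>(N ` K) - {x}) + 1"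
          proof (cases "x \<in> \<Union>(N ` K)")
            case True
            show ?thesis using card_Suc_Diff1[OF fin True] by simp
          qed simp
          thus ?thesis using 1 e by simp
        qed
      qed
      have fN': "\<forall>i\<in>I'. finite (N' i)" using fN unfolding I'_def N'_def by blast
      obtain f2 where f2: "\<forall>i\<in>I'. f2 i \<in> N' i" "inj_on f2 I'"
        using less.hyps[OF cI' fI' fN' H'] by blast
      define f where "f = f2(i0 := x)"
      have "\<forall>i\<in>I. f i \<in> N i" using f2 x unfolding f_def I'_def N'_def by auto
      moreover have "inj_on f I"
      proof (rule inj_onI)
        fix a b assume a: "a \<in> I" and b: "b \<in> I" and ab: "f a = f b"
        have nx: "f2 i \<noteq> x" if "i \<in> I'" for i using f2 that N'_def by blast
        show "a = b"
        proof (cases "a = i0"; cases "b = i0")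
          assume "a \<noteq> i0" "b \<noteq> i0"
          thus ?thesis using ab f2(2) a b f_def I'_def by (simp add: inj_on_def)
        qed (use ab nx a b I'_def f_def in auto)
      qed
      ultimately show ?thesis by blast
    qed
  qed
qed




lemma infinite_hall:
  fixes N :: "'a \<Rightarrow> 'b set"
  assumes fN: "\<forall>w\<in>W. finite (N w)"
    and H: "\<forall>J. J \<subseteq> W \<longrightarrow> finite J \<longrightarrow> card J \<le> card (\<Union>(N ` J))"
  shows "\<exists>f. (\<forall>w\<in>W. f w \<in> N w) \<and> inj_on f W"
proof -
  define T where "T = product_topology (\<lambda>w. discrete_topology (N w)) W"
  have top: "topspace T = PiE W N" unfolding T_def by simp
  have comp: "compact_space T" unfolding T_def
  proof (rule compact_space_product_topology[THEN iffD2], rule disjI2, intro ballI)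
    fix w assume "w \<in> W"
    thus "compact_space (discrete_topology (N w))"
      unfolding compact_space_def using fN by (intro finite_imp_compactin) auto
  qed
  have ne: "N w \<noteq> {}" if "w \<in> W" for w
  proof -
    have "card {w} \<le> card (\<Union>(N ` {w}))" using H that by blast
    thus ?thesis by auto
  qed
  define C where "C w w' = {g \<in> topspace T. g w \<noteq> g w'}" for w w'
  have pre: "closedin T {g \<in> topspace T. g w \<in> S}" if "w \<in> W" "S \<subseteq> N w" for w S
    using closedin_continuous_map_preimage[OF continuous_map_product_projection[OF that(1), of "\<lambda>w. discrete_topology (N w)"], of S]
      that unfolding T_def by simp
  have clC: "closedin T (C w w')" if "w \<in> W" "w' \<in> W" for w w'
  proof -
    have "C w w' = (\<Union>a\<in>N w. {g \<in> topspace T. g w \<in> {a}} \<inter> {g \<in> topspace T. g w' \<in> N w' - {a}})"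
      using that unfolding C_def top by (auto simp: PiE_iff)
    moreover have "closedin T (\<Union>a\<in>N w. {g \<in> topspace T. g w \<in> {a}} \<inter> {g \<in> topspace T. g w' \<in> N w' - {a}})"
    proof (rule closedin_Union)
      show "finite ((\<lambda>a. {g \<in> topspace T. g w \<in> {a}} \<inter> {g \<in> topspace T. g w' \<in> N w' - {a}}) ` N w)"
        using that fN by blast
      have "closedin T ({g \<in> topspace T. g w \<in> {a}} \<inter> {g \<in> topspace T. g w' \<in> N w' - {a}})"
        if "a \<in> N w" for a
        by (rule closedin_Int; rule pre) (use that \<open>w \<in> W\<close> \<open>w' \<in> W\<close> in auto)
      thus "\<And>Ta. Ta \<in> (\<lambda>a. {g \<in> topspace T. g w \<in> {a}} \<inter> {g \<in> topspace T. g w' \<in> N w' - {a}}) ` N w \<Longrightarrow> closedin T Ta"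
        by blast
    qed
    ultimately show ?thesis by simp
  qed
  define Q where "Q = {(w, w'). w \<in> W \<and> w' \<in> W \<and> w \<noteq> w'}"
  define U where "U = insert (topspace T) ((\<lambda>(w, w'). C w w') ` Q)"
  have "\<Inter>U \<noteq> {}"
  proof (rule compact_space_fip[THEN iffD1, OF comp, rule_format], intro conjI allI impI)
    show "\<forall>c\<in>U. closedin T c" unfolding U_def Q_def using clC by auto
  next
    fix F assume F: "finite F \<and> F \<subseteq> U"
    have "F - {topspace T} \<subseteq> (\<lambda>(w, w'). C w w') ` Q" using F U_def by blast
    then obtain P where P: "P \<subseteq> Q" "finite P" "F - {topspace T} = (\<lambda>(w, w'). C w w') ` P"
      using F by (metis finite_Diff finite_subset_image)
    define D where "D = fst ` P \<union> snd ` P"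
    have DW: "D \<subseteq> W" using P(1) unfolding D_def Q_def by auto
    have fD: "finite D" using P(2) D_def by simp
    obtain f where f: "\<forall>i\<in>D. f i \<in> N i" "inj_on f D"
    proof -
      have "\<forall>J\<subseteq>D. card J \<le> card (\<Union>(N ` J))"
        using H DW fD by (meson finite_subset order_trans)
      thus ?thesis using finite_hall[OF fD] fN DW that by blast
    qed
    define g where "g w = (if w \<in> D then f w else if w \<in> W then (SOME a. a \<in> N w) else undefined)" for w
    have gT: "g \<in> topspace T" unfolding top g_def using f DW ne
      by (auto simp: PiE_iff some_in_eq extensional_def)
    have gC: "g \<in> C w w'" if "(w, w') \<in> P" for w w'
    proof -
      have "w \<in> D" "w' \<in> D" "w \<noteq> w'" using that P(1) unfolding D_def Q_def by force+
      hence "g w \<noteq> g w'" using f(2) unfolding g_def inj_on_def by auto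
      thus ?thesis unfolding C_def using gT by blast
    qed
    have "g \<in> Z" if "Z \<in> F" for Z
    proof (cases "Z = topspace T")
      case True thus ?thesis using gT by simp
    next
      case False hence "Z \<in> (\<lambda>(w, w'). C w w') ` P" using that P(3) by blast
      then obtain w w' where "(w, w') \<in> P" "Z = C w w'" by auto
      thus ?thesis using gC by simp
    qed
    hence "g \<in> \<Inter>F" by blast
    thus "\<Inter>F \<noteq> {}" by blast
  qed
  then obtain g where g: "g \<in> \<Inter>U" by blast
  have "\<forall>w\<in>W. g w \<in> N w" using g unfolding U_def top by (auto simp: PiE_iff)
  moreover have "inj_on g W"
  proof (rule inj_onI, rule ccontr)
    fix w w' assume "w \<in> W" "w' \<in> W" "g w = g w'" "w \<noteq> w'"
    hence "C w w' \<in> U" unfolding U_def Q_def by auto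
    hence "g \<in> C w w'" using g by blast
    thus False using \<open>g w = g w'\<close> C_def by simp
  qed
  ultimately show ?thesis by blast
qed




context setting
begin

lemma img_UN: "img \<alpha> s (\<Union>i\<in>I. B i) = (\<Union>i\<in>I. img \<alpha> s (B i))"
  unfolding img_def by blast

lemma img_one: "B \<subseteq> Y \<Longrightarrow> img \<alpha> 1 B = B"
  unfolding img_def using Y_X by (auto simp: one_app)

lemma img_single: "img \<alpha> t B = (\<Union>y\<in>B. img \<alpha> t {y})"
  unfolding img_def by blast

lemma folner_crit:
  assumes cS: "countable (UNIV :: 's set)"
    and H: "\<And>K \<epsilon>. finite K \<Longrightarrow> \<epsilon> > 0 \<Longrightarrow> \<exists>F. finite F \<and> F \<noteq> {} \<and> F \<subseteq> Y \<and>
               (\<forall>s\<in>K. real (card (img \<alpha> s F - F)) \<le> \<epsilon> * real (card F))"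
  shows "S_domain_Folner \<alpha> Y"
proof -
  define g where "g = from_nat_into (UNIV :: 's set)"
  have g: "range g = UNIV" unfolding g_def using cS by simp
  define P where "P n F \<longleftrightarrow> finite F \<and> F \<noteq> {} \<and> F \<subseteq> Y \<and>
     (\<forall>s\<in>g ` {..n}. real (card (img \<alpha> s F - F)) \<le> inverse (real (Suc n)) * real (card F))" for n F
  define F where "F n = (SOME F. P n F)" for n
  have PF: "P n (F n)" for n
  proof -
    have "\<exists>F. P n F" unfolding P_def by (rule H) auto
    thus ?thesis unfolding F_def by (rule someI_ex)
  qed
  have PF1: "finite (F n)" "F n \<noteq> {}" "F n \<subseteq> Y"
    "\<forall>s\<in>g ` {..n}. real (card (img \<alpha> s (F n) - F n)) \<le> inverse (real (Suc n)) * real (card (F n))" for n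
    using PF[of n] unfolding P_def by auto
  show ?thesis unfolding S_domain_Folner_def
  proof (intro exI[of _ F] conjI allI)
    fix n show "finite (F n)" "F n \<noteq> {}" "F n \<subseteq> Y" using PF1 by auto
  next
    fix s
    have "s \<in> range g" using g by simp
    then obtain k where k: "g k = s" by blast
    have FD: "F n \<inter> Dom \<alpha> (star s * s) = F n" for n
    proof -
      have "F n \<subseteq> Dom \<alpha> (star s * s)" using PF1(3)[of n] Y_sub_dom[of s] by (rule order_trans)
      thus ?thesis by (rule Int_absorb2)
    qed
    have "(\<lambda>n. real (card (img \<alpha> s (F n) - F n)) / real (card (F n))) \<longlonglongrightarrow> 0"
    proof (rule tendsto_sandwich[OF _ _ tendsto_const LIMSEQ_inverse_real_of_nat])
      show "\<forall>\<^sub>F n in sequentially. 0 \<le> real (card (img \<alpha> s (F n) - F n)) / real (card (F n))" by simp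
      have "real (card (img \<alpha> s (F n) - F n)) / real (card (F n)) \<le> inverse (real (Suc n))" if "n \<ge> k" for n
      proof -
        have "s \<in> g ` {..n}" using k that by auto
        hence "real (card (img \<alpha> s (F n) - F n)) \<le> inverse (real (Suc n)) * real (card (F n))"
          using PF1(4)[of n] by blast
        moreover have "card (F n) > 0" using PF1(1,2)[of n] by (simp add: card_gt_0_iff)
        ultimately show ?thesis by (simp add: divide_le_eq)
      qed
      thus "\<forall>\<^sub>F n in sequentially. real (card (img \<alpha> s (F n) - F n)) / real (card (F n)) \<le> inverse (real (Suc n))"
        unfolding eventually_sequentially by blast
    qed
    thus "(\<lambda>n. real (card (img \<alpha> s (F n \<inter> Dom \<alpha> (star s * s)) - F n)) / real (card (F n))) \<longlonglongrightarrow> 0"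
      using FD by simp
  qed
qed

lemma expansion:
  assumes cS: "countable (UNIV :: 's set)" and nf: "\<not> S_domain_Folner \<alpha> Y"
  shows "\<exists>M. finite M \<and> M \<noteq> {} \<and> (\<forall>F. finite F \<longrightarrow> F \<subseteq> Y \<longrightarrow>
            2 * card F \<le> card (\<Union>t\<in>M. img \<alpha> t F))"
proof -
  obtain K \<epsilon> where K: "finite K" "\<epsilon> > (0::real)" and
    bad: "\<And>F. finite F \<Longrightarrow> F \<noteq> {} \<Longrightarrow> F \<subseteq> Y \<Longrightarrow> \<exists>s\<in>K. real (card (img \<alpha> s F - F)) > \<epsilon> * real (card F)"
    using folner_crit[OF cS] nf by (meson not_le)
  define L where "L = insert 1 K"
  have fL: "finite L" using K L_def by simp
  define \<Phi> where "\<Phi> G = (\<Union>s\<in>L. img \<alpha> s G)" for G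
  have exp1: "(1 + \<epsilon>) * real (card G) \<le> real (card (\<Phi> G))" if G: "finite G" "G \<noteq> {}" "G \<subseteq> Y" for G
  proof -
    obtain s where s: "s \<in> K" "real (card (img \<alpha> s G - G)) > \<epsilon> * real (card G)" using bad[OF G] by blast
    have sub: "G \<union> (img \<alpha> s G - G) \<subseteq> \<Phi> G" unfolding \<Phi>_def L_def using img_one[OF G(3)] s(1) by blast
    have fin: "finite (\<Phi> G)" unfolding \<Phi>_def using fL G(1) finite_img by blast
    have "card (G \<union> (img \<alpha> s G - G)) = card G + card (img \<alpha> s G - G)"
      using G(1) finite_img[OF G(1)] by (intro card_Un_disjoint) auto
    moreover have "card (G \<union> (img \<alpha> s G - G)) \<le> card (\<Phi> G)" using card_mono[OF fin sub] .
    ultimately have "real (card G) + real (card (img \<alpha> s G - G)) \<le> real (card (\<Phi> G))" by simp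
    thus ?thesis using s(2) by (simp add: algebra_simps)
  qed
  have iter: "\<exists>M. finite M \<and> M \<noteq> {} \<and> (\<forall>F. finite F \<longrightarrow> F \<noteq> {} \<longrightarrow> F \<subseteq> Y \<longrightarrow>
            (1 + \<epsilon>) ^ k * real (card F) \<le> real (card (\<Union>t\<in>M. img \<alpha> t F)))" for k
  proof (induction k)
    case 0
    show ?case by (intro exI[of _ "{1}"]) (auto simp: img_one)
  next
    case (Suc k)
    then obtain M where M: "finite M" "M \<noteq> {}" and
      MF: "\<And>F. finite F \<Longrightarrow> F \<noteq> {} \<Longrightarrow> F \<subseteq> Y \<Longrightarrow> (1 + \<epsilon>) ^ k * real (card F) \<le> real (card (\<Union>t\<in>M. img \<alpha> t F))"
      by blast
    define M' where "M' = (\<lambda>(a, b). a * b) ` (L \<times> M)"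
    have "finite M'" using fL M(1) M'_def by simp
    moreover have "M' \<noteq> {}" using M(2) L_def M'_def by auto
    moreover have "(1 + \<epsilon>) ^ Suc k * real (card F) \<le> real (card (\<Union>t\<in>M'. img \<alpha> t F))"
      if F: "finite F" "F \<noteq> {}" "F \<subseteq> Y" for F
    proof -
      define G where "G = (\<Union>t\<in>M. img \<alpha> t F)"
      have fG: "finite G" unfolding G_def using M(1) F(1) finite_img by blast
      have GY: "G \<subseteq> Y" unfolding G_def using img_Y[OF F(3)] by blast
      have "card F > 0" using F by (simp add: card_gt_0_iff)
      hence "(1 + \<epsilon>) ^ k * real (card F) > 0" using K(2) by simp
      hence "real (card G) > 0" using MF[OF F] unfolding G_def by linarith
      hence "card G > 0" by simp
      hence Gne: "G \<noteq> {}" by auto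
      have e: "(\<Union>t\<in>M'. img \<alpha> t F) = \<Phi> G"
      proof -
        have "(\<Union>t\<in>M'. img \<alpha> t F) = (\<Union>a\<in>L. \<Union>b\<in>M. img \<alpha> (a * b) F)" unfolding M'_def by auto
        also have "\<dots> = (\<Union>a\<in>L. \<Union>b\<in>M. img \<alpha> a (img \<alpha> b F))" by (simp add: img_comp)
        also have "\<dots> = \<Phi> G" unfolding \<Phi>_def G_def by (simp add: img_UN)
        finally show ?thesis .
      qed
      have "(1 + \<epsilon>) ^ Suc k * real (card F) = (1 + \<epsilon>) * ((1 + \<epsilon>) ^ k * real (card F))" by simp
      also have "\<dots> \<le> (1 + \<epsilon>) * real (card G)" using MF[OF F] G_def K(2) by (intro mult_left_mono) auto
      also have "\<dots> \<le> real (card (\<Phi> G))" using exp1[OF fG Gne GY] .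
      finally show ?thesis using e by simp
    qed
    ultimately show ?case by blast
  qed
  obtain k where k: "2 < (1 + \<epsilon>) ^ k" using real_arch_pow[of "1 + \<epsilon>" 2] K(2) by auto
  obtain M where M: "finite M" "M \<noteq> {}" and
    MF: "\<And>F. finite F \<Longrightarrow> F \<noteq> {} \<Longrightarrow> F \<subseteq> Y \<Longrightarrow> (1 + \<epsilon>) ^ k * real (card F) \<le> real (card (\<Union>t\<in>M. img \<alpha> t F))"
    using iter[of k] by blast
  have "2 * card F \<le> card (\<Union>t\<in>M. img \<alpha> t F)" if F: "finite F" "F \<subseteq> Y" for F
  proof (cases "F = {}")
    case True thus ?thesis by simp
  next
    case False
    have "2 * real (card F) \<le> (1 + \<epsilon>) ^ k * real (card F)" using k by (intro mult_right_mono) auto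
    also have "\<dots> \<le> real (card (\<Union>t\<in>M. img \<alpha> t F))" using MF[OF F(1) False F(2)] .
    finally show ?thesis by linarith
  qed
  thus ?thesis using M by blast
qed

end



context setting
begin

lemma not_folner_par:
  assumes cS: "countable (UNIV :: 's set)" and nf: "\<not> S_domain_Folner \<alpha> Y"
  shows "S_paradoxical X \<alpha> Y"
proof -
  obtain M where M: "finite M" "M \<noteq> {}" and
    MF: "\<And>F. finite F \<Longrightarrow> F \<subseteq> Y \<Longrightarrow> 2 * card F \<le> card (\<Union>t\<in>M. img \<alpha> t F)"
    using expansion[OF cS nf] by blast
  define W where "W = Y \<times> (UNIV :: bool set)"
  define N where "N w = (\<Union>t\<in>M. img \<alpha> t {fst w})" for w :: "'x \<times> bool"
  have fN: "\<forall>w\<in>W. finite (N w)" unfolding N_def using M(1) finite_img by blast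
  have H: "\<forall>J. J \<subseteq> W \<longrightarrow> finite J \<longrightarrow> card J \<le> card (\<Union>(N ` J))"
  proof (intro allI impI)
    fix J assume J: "J \<subseteq> W" "finite J"
    define P where "P = fst ` J"
    have fP: "finite P" "P \<subseteq> Y" using J unfolding P_def W_def by auto
    have e: "\<Union>(N ` J) = (\<Union>t\<in>M. img \<alpha> t P)"
    proof -
      have "\<Union>(N ` J) = (\<Union>t\<in>M. \<Union>y\<in>P. img \<alpha> t {y})" unfolding N_def P_def by blast
      also have "\<dots> = (\<Union>t\<in>M. img \<alpha> t P)" using img_single[of _ P] by simp
      finally show ?thesis .
    qed
    have "J \<subseteq> P \<times> (UNIV :: bool set)" unfolding P_def by force
    hence "card J \<le> card (P \<times> (UNIV :: bool set))" using fP by (intro card_mono) auto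
    also have "\<dots> = 2 * card P" by (simp add: card_cartesian_product)
    also have "\<dots> \<le> card (\<Union>(N ` J))" using MF[OF fP] e by simp
    finally show "card J \<le> card (\<Union>(N ` J))" .
  qed
  obtain \<psi> where \<psi>N: "\<forall>w\<in>W. \<psi> w \<in> N w" and \<psi>inj: "inj_on \<psi> W"
    using infinite_hall[OF fN H] by blast
  obtain r :: nat and u where ru: "M = u ` {i. i < r}" using finite_imp_nat_seg_image_inj_on[OF M(1)] by blast
  have r1: "r \<ge> 1" using M(2) ru by (cases r) auto
  have ex: "\<exists>i. i < r \<and> \<alpha> (u i) y = Some (\<psi> (y, b))" if "y \<in> Y" for y b
  proof -
    have "\<psi> (y, b) \<in> N (y, b)" using \<psi>N that W_def by auto
    then obtain t where "t \<in> M" "\<psi> (y, b) \<in> img \<alpha> t {y}" unfolding N_def by auto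
    thus ?thesis using ru unfolding img_def by auto
  qed
  define idx where "idx y b = (LEAST i. i < r \<and> \<alpha> (u i) y = Some (\<psi> (y, b)))" for y b
  have idx: "idx y b < r \<and> \<alpha> (u (idx y b)) y = Some (\<psi> (y, b))" if "y \<in> Y" for y b
    unfolding idx_def by (rule LeastI_ex[OF ex[OF that]])
  have \<psi>Y: "\<psi> (y, b) \<in> Y" if "y \<in> Y" for y b
    using Y_maps[OF that] idx[OF that, of b] by blast
  have inj: "y = y' \<and> b = b'" if "y \<in> Y" "y' \<in> Y" "\<psi> (y, b) = \<psi> (y', b')" for y y' b b'
    using \<psi>inj that unfolding inj_on_def W_def by blast
  define Cs where "Cs b i = (\<lambda>y. \<psi> (y, b)) ` {y \<in> Y. idx y b = i}" for b i
  have CsY: "Cs b i \<subseteq> Y" for b i unfolding Cs_def using \<psi>Y by blast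
  have imgC: "img \<alpha> (star (u i)) (Cs b i) = {y \<in> Y. idx y b = i}" for b i
  proof
    show "img \<alpha> (star (u i)) (Cs b i) \<subseteq> {y \<in> Y. idx y b = i}"
    proof
      fix z assume "z \<in> img \<alpha> (star (u i)) (Cs b i)"
      then obtain y where y: "y \<in> Y" "idx y b = i" "\<alpha> (star (u i)) (\<psi> (y, b)) = Some z"
        unfolding img_def Cs_def by blast
      have "\<alpha> (star (u i)) (\<psi> (y, b)) = Some y" using inv_app idx[OF y(1), of b] y(2) by blast
      thus "z \<in> {y \<in> Y. idx y b = i}" using y by simp
    qed
  next
    show "{y \<in> Y. idx y b = i} \<subseteq> img \<alpha> (star (u i)) (Cs b i)"
    proof
      fix y assume y: "y \<in> {y \<in> Y. idx y b = i}"
      hence "\<alpha> (star (u i)) (\<psi> (y, b)) = Some y" using inv_app idx[of y b] by blast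
      moreover have "\<psi> (y, b) \<in> Cs b i" unfolding Cs_def using y by blast
      ultimately show "y \<in> img \<alpha> (star (u i)) (Cs b i)" unfolding img_def by blast
    qed
  qed
  have cover: "Y = (\<Union>i<r. img \<alpha> (star (u i)) (Cs b i))" for b
    unfolding imgC using idx by blast
  have dimg: "disjoint_family_on (\<lambda>i. img \<alpha> (star (u i)) (Cs b i)) {..<r}" for b
    unfolding disjoint_family_on_def imgC by blast
  have dC: "disjoint_family_on (Cs b) {..<r}" for b
  proof (unfold disjoint_family_on_def, intro ballI impI)
    fix i j assume "i \<in> {..<r}" "j \<in> {..<r}" "i \<noteq> j"
    show "Cs b i \<inter> Cs b j = {}"
    proof (rule ccontr)
      assume "Cs b i \<inter> Cs b j \<noteq> {}"
      then obtain y y' where "y \<in> Y" "y' \<in> Y" "idx y b = i" "idx y' b = j" "\<psi> (y, b) = \<psi> (y', b)"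
        unfolding Cs_def by blast
      thus False using inj \<open>i \<noteq> j\<close> by blast
    qed
  qed
  have dAB: "Cs False i \<inter> Cs True j = {}" for i j
  proof (rule ccontr)
    assume "Cs False i \<inter> Cs True j \<noteq> {}"
    then obtain y y' where "y \<in> Y" "y' \<in> Y" "\<psi> (y, False) = \<psi> (y', True)"
      unfolding Cs_def by blast
    thus False using inj by blast
  qed
  have CX: "Cs b i \<subseteq> X \<and> Cs b i \<subseteq> Dom \<alpha> (star (star (u i)) * star (u i))" for b i
    using CsY Y_X Y_sub_dom by blast
  show ?thesis unfolding S_paradoxical_def
    apply (rule exI[of _ r], rule exI[of _ r], rule exI[of _ "Cs False"], rule exI[of _ "Cs True"],
        rule exI[of _ "\<lambda>i. star (u i)"], rule exI[of _ "\<lambda>i. star (u i)"])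
    apply (intro conjI)
    using r1 apply simp
    using r1 apply simp
    using CX apply blast
    using CX apply blast
    apply (rule cover)
    apply (rule dimg)
    apply (rule cover)
    apply (rule dimg)
    apply (rule dC)
    apply (rule dC)
    using dAB apply blast
    using CsY by blast
qed

end

theorem mainTheorem11:
  fixes X :: "'x set" and \<alpha> :: "'s::monoid_mult \<Rightarrow> 'x \<Rightarrow> 'x option" and e0 :: 's
  assumes "inverse_semigroup TYPE('s)"
    and "countable (UNIV :: 's set)"
    and "minimal_projection e0"
    and "representation X \<alpha>"
  shows "(S_amenable X \<alpha> \<longleftrightarrow> \<not> S_paradoxical X \<alpha> (Dom \<alpha> e0))
       \<and> (\<not> S_paradoxical X \<alpha> (Dom \<alpha> e0) \<longleftrightarrow> S_domain_Folner \<alpha> (Dom \<alpha> e0))"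
proof -
  interpret st: setting X \<alpha> e0
    using assms(1,3,4) unfolding setting_def invsg_def setting_axioms_def by blast
  have 1: "S_amenable X \<alpha> \<Longrightarrow> \<not> S_paradoxical X \<alpha> (Dom \<alpha> e0)" by (rule st.amen_not_par)
  have 2: "\<not> S_paradoxical X \<alpha> (Dom \<alpha> e0) \<Longrightarrow> S_domain_Folner \<alpha> (Dom \<alpha> e0)"
    using st.not_folner_par[OF assms(2)] by blast
  have 3: "S_domain_Folner \<alpha> (Dom \<alpha> e0) \<Longrightarrow> S_amenable X \<alpha>" by (rule st.folner_amen)
  show ?thesis using 1 2 3 by blast
qed

end
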